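(* Let $n,\ell$ be positive integers with $\ell\mid n$, let $k=m\ell$ with $0\le m<n/\ell$, and let $p\in(0,1)$. Run the (1+1) EA with mutation rate $p$ on $\mathrm{BLO}_\ell$ starting from an individual $x$ whose first $k$ bits are all ones, whose bits $k+1,\dots,k+\ell$ are uniformly distributed on the $2^\ell-1$ patterns other than all ones, and whose remaining bits are arbitrary. Let $T_k$ be the number of iterations until the fitness first exceeds $m$. Then \[ \mathbb{E}[T_k]=\frac{\mathbb{E}[T']}{(1-p)^k}, \] where $T'$ is the hitting time of $\mathbf{1}^\ell$ for the random walk on $\mathbb{Z}_2^\ell$ with i.i.d. bitwise-flip steps of rate $p$ started uniformly on $\mathbb{Z}_2^\ell\setminus\{\mathbf{1}^\ell\}$; consequently $\mathbb{E}[T_k]=\frac{2^\ell}{2^\ell-1}(1-p)^{-k}\sum_{j=1}^{\ell}\binom{\ell}{j}\frac{1}{1-(1-2p)^j}$.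
   Context: For $x\in\{0,1\}^n$ with $\ell\mid n$, $\mathrm{BLO}_\ell(x)=\sum_{m=1}^{n/\ell}\prod_{i=1}^{m\ell}x_i$. The (1+1) EA with mutation rate $p$: each iteration creates $y$ from the current $x$ by flipping each bit independently with probability $p$, and $y$ replaces $x$ iff $\mathrm{BLO}_\ell(y)\ge\mathrm{BLO}_\ell(x)$. The random walk on $\mathbb{Z}_2^\ell$ (bit strings with coordinatewise addition mod 2) is $X_{t+1}=X_t+W_{t+1}$ with $W_t$ i.i.d., each bit of $W_t$ equal to $1$ independently with probability $p$; $\mathbf{1}^\ell$ is the all-ones string and $T'=\min\{t\ge0:X_t=\mathbf{1}^\ell\}$. *)

theory Defs
  imports "HOL-Probability.Probability"
begin

text \<open>Bit strings of length N are modelled as functions nat \<Rightarrow> bool, bit i (0-indexed)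
  for i < N; bits at positions \<ge> N are kept False.\<close>

text \<open>Generic discrete-time Markov chain with kernel K and initial distribution mu:
  distribution of the trajectory (X_t, ..., X_1, X_0) (newest state first).\<close>
fun traj :: "('s \<Rightarrow> 's pmf) \<Rightarrow> 's pmf \<Rightarrow> nat \<Rightarrow> 's list pmf" where
  "traj K mu 0 = map_pmf (\<lambda>x. [x]) mu"
| "traj K mu (Suc t) = bind_pmf (traj K mu t) (\<lambda>xs. map_pmf (\<lambda>y. y # xs) (K (hd xs)))"

text \<open>P(T > t) for the hitting time T = min{t \<ge> 0. X_t \<in> S}.\<close>
definition not_hit_by :: "('s \<Rightarrow> 's pmf) \<Rightarrow> 's pmf \<Rightarrow> 's set \<Rightarrow> nat \<Rightarrow> real" where
  "not_hit_by K mu S t = measure_pmf.prob (traj K mu t) {xs. set xs \<inter> S = {}}"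

text \<open>Expected hitting time E[T] = sum_{t\<ge>0} P(T > t) (tail-sum formula, in [0,\<infinity>]).\<close>
definition expected_hitting_time :: "('s \<Rightarrow> 's pmf) \<Rightarrow> 's pmf \<Rightarrow> 's set \<Rightarrow> ennreal" where
  "expected_hitting_time K mu S = (\<Sum>t. ennreal (not_hit_by K mu S t))"

definition BLO :: "nat \<Rightarrow> nat \<Rightarrow> (nat \<Rightarrow> bool) \<Rightarrow> nat" where
  "BLO n l x = (\<Sum>j=1..n div l. \<Prod>i<j * l. (if x i then 1 else 0))"

definition mutate :: "nat \<Rightarrow> real \<Rightarrow> (nat \<Rightarrow> bool) \<Rightarrow> (nat \<Rightarrow> bool) pmf" where
  "mutate N p x = map_pmf (\<lambda>w i. x i \<noteq> w i) (Pi_pmf {0..<N} False (\<lambda>_. bernoulli_pmf p))"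

definition ea_step :: "nat \<Rightarrow> nat \<Rightarrow> real \<Rightarrow> (nat \<Rightarrow> bool) \<Rightarrow> (nat \<Rightarrow> bool) pmf" where
  "ea_step n l p x = map_pmf (\<lambda>y. if BLO n l y \<ge> BLO n l x then y else x) (mutate n p x)"

definition blocks :: "nat \<Rightarrow> (nat \<Rightarrow> bool) set" where
  "blocks l = {b. \<forall>i. l \<le> i \<longrightarrow> \<not> b i}"

definition ones :: "nat \<Rightarrow> nat \<Rightarrow> bool" where
  "ones l = (\<lambda>i. i < l)"

definition unif_nonones :: "nat \<Rightarrow> (nat \<Rightarrow> bool) pmf" where
  "unif_nonones l = pmf_of_set (blocks l - {ones l})"

text \<open>Random walk on Z_2^l: X_{t+1} = X_t + W_{t+1}.\<close>
definition rw_step :: "nat \<Rightarrow> real \<Rightarrow> (nat \<Rightarrow> bool) \<Rightarrow> (nat \<Rightarrow> bool) pmf" where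
  "rw_step l p x = mutate l p x"

definition init_ind :: "nat \<Rightarrow> nat \<Rightarrow> nat \<Rightarrow> (nat \<Rightarrow> bool) \<Rightarrow> (nat \<Rightarrow> bool) \<Rightarrow> nat \<Rightarrow> bool" where
  "init_ind n l k z b = (\<lambda>i. if i < k then True else if i < k + l then b (i - k)
                              else if i < n then z i else False)"

end

theory Submission
  imports Defs
begin


lemma traj_nonempty: "xs \<in> set_pmf (traj K mu t) \<Longrightarrow> xs \<noteq> []"
  by (induction t arbitrary: xs) auto

lemma traj_first: "traj K mu (Suc t) = bind_pmf mu (\<lambda>x. map_pmf (\<lambda>ys. ys @ [x]) (traj K (K x) t))"
proof (induction t)
  case 0 show ?case by (simp add: map_pmf_def bind_assoc_pmf bind_return_pmf)
next
  case (Suc t)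
  have "traj K mu (Suc (Suc t)) = bind_pmf (traj K mu (Suc t)) (\<lambda>xs. map_pmf (\<lambda>y. y # xs) (K (hd xs)))" by simp
  also have "\<dots> = bind_pmf mu (\<lambda>x. bind_pmf (traj K (K x) t) (\<lambda>ys. map_pmf (\<lambda>y. y # ys @ [x]) (K (hd (ys @ [x])))))"
    unfolding Suc by (simp only: bind_assoc_pmf bind_map_pmf o_def)
  also have "\<dots> = bind_pmf mu (\<lambda>x. bind_pmf (traj K (K x) t) (\<lambda>ys. map_pmf (\<lambda>y. y # ys @ [x]) (K (hd ys))))"
    by (intro bind_pmf_cong refl) (auto dest: traj_nonempty)
  also have "\<dots> = bind_pmf mu (\<lambda>x. map_pmf (\<lambda>ys. ys @ [x]) (traj K (K x) (Suc t)))"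
    by (simp add: map_bind_pmf map_pmf_comp o_def)
  finally show ?case .
qed

lemma integrable_pmf_bdd: "(\<And>x. \<bar>f x\<bar> \<le> B) \<Longrightarrow> integrable (measure_pmf M) (f :: _ \<Rightarrow> real)"
  by (intro measure_pmf.integrable_const_bound[where B=B]) auto

lemma prob_bind_pmf: "measure_pmf.prob (bind_pmf M N) X = (\<integral>x. measure_pmf.prob (N x) X \<partial>M)"
  unfolding measure_pmf_bind
  using measurable_measure_pmf[of N]
  by (subst measure_pmf.measure_bind[where N="count_space UNIV"]) auto

lemma integral_bind_pmf_bdd:
  fixes f :: "_ \<Rightarrow> real"
  assumes "\<And>x. \<bar>f x\<bar> \<le> B"
  shows "(\<integral>x. f x \<partial>bind_pmf M N) = (\<integral>x. (\<integral>y. f y \<partial>N x) \<partial>M)"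
  unfolding measure_pmf_bind
  using measurable_measure_pmf[of N] assms
  by (subst integral_bind[where K="count_space UNIV" and B=B and B'=1]) 
     (auto simp: measure_pmf.prob_space_axioms prob_space_imp_subprob_space measure_pmf.finite_measure_axioms)

fun UU :: "('s \<Rightarrow> 's pmf) \<Rightarrow> 's set \<Rightarrow> nat \<Rightarrow> 's \<Rightarrow> real" where
  "UU K S 0 x = indicator (-S) x"
| "UU K S (Suc t) x = indicator (-S) x * measure_pmf.expectation (K x) (UU K S t)"

fun RR :: "('s \<Rightarrow> 's pmf) \<Rightarrow> 's set \<Rightarrow> ('s \<Rightarrow> real) \<Rightarrow> nat \<Rightarrow> 's \<Rightarrow> real" where
  "RR K S h 0 x = h x"
| "RR K S h (Suc t) x = indicator (-S) x * measure_pmf.expectation (K x) (RR K S h t)"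

lemma UU_bounds: "0 \<le> UU K S t x \<and> UU K S t x \<le> 1"
proof (induction t arbitrary: x)
  case 0 thus ?case by (auto simp: indicator_def)
next
  case (Suc t)
  have "0 \<le> measure_pmf.expectation (K x) (UU K S t)"
    using Suc by (intro integral_nonneg_AE) auto
  moreover have "measure_pmf.expectation (K x) (UU K S t) \<le> 1"
  proof -
    have "measure_pmf.expectation (K x) (UU K S t) \<le> measure_pmf.expectation (K x) (\<lambda>_. 1)"
      using Suc by (intro integral_mono integrable_pmf_bdd[where B=1]) auto
    thus ?thesis by simp
  qed
  ultimately show ?case by (auto simp: indicator_def)
qed

lemma UU_integrable: "integrable (measure_pmf M) (UU K S t)"
proof (rule integrable_pmf_bdd[where B=1])
  fix x show "\<bar>UU K S t x\<bar> \<le> 1" using UU_bounds[of K S t x] by simp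
qed

lemma not_hit_by_UU: "not_hit_by K mu S t = measure_pmf.expectation mu (UU K S t)"
proof (induction t arbitrary: mu)
  case 0
  have "not_hit_by K mu S 0 = measure_pmf.prob mu (-S)"
    unfolding not_hit_by_def by (simp add: vimage_def Compl_eq)
  thus ?case by simp
next
  case (Suc t)
  have "not_hit_by K mu S (Suc t) = (\<integral>x. measure_pmf.prob (map_pmf (\<lambda>ys. ys @ [x]) (traj K (K x) t)) {xs. set xs \<inter> S = {}} \<partial>mu)"
    unfolding not_hit_by_def traj_first prob_bind_pmf ..
  also have "\<dots> = (\<integral>x. indicator (-S) x * not_hit_by K (K x) S t \<partial>mu)"
  proof -
    have "measure_pmf.prob (map_pmf (\<lambda>ys. ys @ [x]) (traj K (K x) t)) {xs. set xs \<inter> S = {}}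
       = indicator (-S) x * not_hit_by K (K x) S t" for x
    proof (cases "x \<in> S")
      case True
      hence "(\<lambda>ys. ys @ [x]) -` {xs. set xs \<inter> S = {}} = {}" by auto
      thus ?thesis using True by (simp add: measure_map_pmf)
    next
      case False
      hence "(\<lambda>ys. ys @ [x]) -` {xs. set xs \<inter> S = {}} = {xs. set xs \<inter> S = {}}" by auto
      thus ?thesis using False by (simp add: measure_map_pmf not_hit_by_def)
    qed
    thus ?thesis by simp
  qed
  also have "\<dots> = measure_pmf.expectation mu (UU K S (Suc t))"
  proof -
    have "UU K S (Suc t) = (\<lambda>x. indicator (-S) x * not_hit_by K (K x) S t)"
      by (rule ext) (simp add: Suc)
    thus ?thesis by simp
  qed
  finally show ?case .
qed

lemma UU_mono: "UU K S (Suc t) x \<le> UU K S t x"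
proof (induction t arbitrary: x)
  case 0
  have "measure_pmf.expectation (K x) (UU K S 0) \<le> measure_pmf.expectation (K x) (\<lambda>_. 1)"
    using UU_bounds[of K S 0] by (intro integral_mono UU_integrable) auto
  hence "measure_pmf.expectation (K x) (UU K S 0) \<le> 1" by simp
  thus ?case by (auto simp: indicator_def)
next
  case (Suc t)
  have "measure_pmf.expectation (K x) (UU K S (Suc t)) \<le> measure_pmf.expectation (K x) (UU K S t)"
    using Suc by (intro integral_mono UU_integrable) auto
  thus ?case by (auto simp: indicator_def)
qed

lemma UU_antimono: "s \<le> t \<Longrightarrow> UU K S t x \<le> UU K S s x"
proof (induction t rule: dec_induct)
  case base show ?case by simp
next
  case (step t) thus ?case using UU_mono[of K S t x] by linarith
qed

lemma hitting_time_potential: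
  fixes K :: "'s \<Rightarrow> 's pmf" and h :: "'s \<Rightarrow> real"
  assumes inv: "\<And>x. x \<in> A \<Longrightarrow> set_pmf (K x) \<subseteq> A"
    and h0: "\<And>x. 0 \<le> h x" and hB: "\<And>x. h x \<le> B"
    and hS: "\<And>x. x \<in> A \<Longrightarrow> x \<in> S \<Longrightarrow> h x = 0"
    and heq: "\<And>x. x \<in> A \<Longrightarrow> x \<notin> S \<Longrightarrow> h x = 1 + measure_pmf.expectation (K x) h"
    and mu: "set_pmf mu \<subseteq> A"
  shows "expected_hitting_time K mu S = ennreal (measure_pmf.expectation mu h)"
proof -
  have B0: "0 \<le> B" using h0[of undefined] hB[of undefined] by linarith
  have Rb: "0 \<le> RR K S h t x \<and> RR K S h t x \<le> B" for t x
  proof (induction t arbitrary: x)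
    case 0 thus ?case using h0 hB by simp
  next
    case (Suc t)
    have "0 \<le> measure_pmf.expectation (K x) (RR K S h t)"
      using Suc by (intro integral_nonneg_AE) auto
    moreover have "measure_pmf.expectation (K x) (RR K S h t) \<le> measure_pmf.expectation (K x) (\<lambda>_. B)"
      using Suc B0 by (intro integral_mono integrable_pmf_bdd[where B=B]) (auto simp: abs_le_iff)
    ultimately show ?case using B0 by (auto simp: indicator_def)
  qed
  have Rint: "integrable (measure_pmf M) (RR K S h t)" for M t
    using Rb B0 by (intro integrable_pmf_bdd[where B=B]) (auto simp: abs_le_iff)
  have hint: "integrable (measure_pmf M) h" for M
    using h0 hB B0 by (intro integrable_pmf_bdd[where B=B]) (auto simp: abs_le_iff intro: order.trans[OF _ h0])
  have RU: "x \<in> A \<Longrightarrow> RR K S h t x \<le> B * UU K S t x" for t x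
  proof (induction t arbitrary: x)
    case 0 thus ?case using hS hB by (cases "x \<in> S") (auto simp: indicator_def)
  next
    case (Suc t)
    have "measure_pmf.expectation (K x) (RR K S h t) \<le> measure_pmf.expectation (K x) (\<lambda>y. B * UU K S t y)"
      using Suc inv[OF Suc.prems]
      by (intro integral_mono_AE Rint integrable_mult_right UU_integrable AE_pmfI) auto
    also have "\<dots> = B * measure_pmf.expectation (K x) (UU K S t)" by simp
    finally show ?case using B0 by (auto simp: indicator_def)
  qed
  have hdec: "x \<in> A \<Longrightarrow> h x = (\<Sum>s<t. UU K S s x) + RR K S h t x" for t x
  proof (induction t arbitrary: x)
    case 0 thus ?case by simp
  next
    case (Suc t)
    show ?case
    proof (cases "x \<in> S")
      case True
      have "UU K S s x = 0" for s using True by (cases s) auto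
      thus ?thesis using True hS[OF Suc.prems True] by simp
    next
      case False
      have "h x = 1 + measure_pmf.expectation (K x) h" using heq[OF Suc.prems False] .
      also have "measure_pmf.expectation (K x) h = measure_pmf.expectation (K x) (\<lambda>y. (\<Sum>s<t. UU K S s y) + RR K S h t y)"
        using inv[OF Suc.prems] Suc.IH by (intro integral_cong_AE AE_pmfI) auto
      also have "\<dots> = (\<Sum>s<t. measure_pmf.expectation (K x) (UU K S s)) + measure_pmf.expectation (K x) (RR K S h t)"
        by (simp add: integral_add integral_sum UU_integrable Rint)
      finally show ?thesis using False by (simp del: sum.lessThan_Suc add: sum.lessThan_Suc_shift)
    qed
  qed
  have Ub: "x \<in> A \<Longrightarrow> real (Suc t) * UU K S t x \<le> B" for t x
  proof -
    assume x: "x \<in> A"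
    have "real (Suc t) * UU K S t x = (\<Sum>s<Suc t. UU K S t x)" by simp
    also have "\<dots> \<le> (\<Sum>s<Suc t. UU K S s x)"
      by (intro sum_mono UU_antimono) auto
    also have "\<dots> \<le> h x" using hdec[OF x, of "Suc t"] Rb[of "Suc t" x] by linarith
    finally show ?thesis using hB[of x] by linarith
  qed
  have Rsmall: "x \<in> A \<Longrightarrow> RR K S h t x \<le> B * B / real (Suc t)" for t x
  proof -
    assume x: "x \<in> A"
    have "UU K S t x \<le> B / real (Suc t)" using Ub[OF x, of t] by (simp add: field_simps)
    hence "B * UU K S t x \<le> B * (B / real (Suc t))" using B0 by (intro mult_left_mono)
    thus ?thesis using RU[OF x, of t] by simp
  qed
  have partial: "(\<Sum>s<t. not_hit_by K mu S s) = measure_pmf.expectation mu h - measure_pmf.expectation mu (RR K S h t)" for t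
  proof -
    have "(\<Sum>s<t. not_hit_by K mu S s) = measure_pmf.expectation mu (\<lambda>x. \<Sum>s<t. UU K S s x)"
      by (simp add: not_hit_by_UU integral_sum UU_integrable)
    also have "\<dots> = measure_pmf.expectation mu (\<lambda>x. h x - RR K S h t x)"
      using mu hdec by (intro integral_cong_AE AE_pmfI) (auto simp: algebra_simps)
    also have "\<dots> = measure_pmf.expectation mu h - measure_pmf.expectation mu (RR K S h t)"
      by (simp add: hint Rint)
    finally show ?thesis .
  qed
  have lim0: "(\<lambda>t. measure_pmf.expectation mu (RR K S h t)) \<longlonglongrightarrow> 0"
  proof (rule tendsto_sandwich[of "\<lambda>_. 0" _ _ "\<lambda>t. B * B / real (Suc t)"])
    show "\<forall>\<^sub>F t in sequentially. 0 \<le> measure_pmf.expectation mu (RR K S h t)"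
      using Rb by (intro always_eventually allI integral_nonneg_AE) auto
    show "\<forall>\<^sub>F t in sequentially. measure_pmf.expectation mu (RR K S h t) \<le> B * B / real (Suc t)"
    proof (intro always_eventually allI)
      fix t
      have "measure_pmf.expectation mu (RR K S h t) \<le> measure_pmf.expectation mu (\<lambda>_. B * B / real (Suc t))"
        using mu Rsmall by (intro integral_mono_AE Rint AE_pmfI) auto
      thus "measure_pmf.expectation mu (RR K S h t) \<le> B * B / real (Suc t)" by simp
    qed
    show "(\<lambda>_. 0) \<longlonglongrightarrow> (0::real)" by simp
    show "(\<lambda>t. B * B / real (Suc t)) \<longlonglongrightarrow> 0"
      using LIMSEQ_Suc[OF lim_const_over_n[of "B*B"]] by simp
  qed
  have sums: "(\<lambda>t. not_hit_by K mu S t) sums measure_pmf.expectation mu h"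
    unfolding sums_def partial
    using tendsto_diff[OF tendsto_const lim0, of "measure_pmf.expectation mu h"] by simp
  have nn: "0 \<le> not_hit_by K mu S t" for t unfolding not_hit_by_def by simp
  show ?thesis
    unfolding expected_hitting_time_def
    using suminf_ennreal2[OF nn sums_summable[OF sums]] sums_unique[OF sums] by simp
qed



lemma expectation_prod_Pi_pmf_bdd:
  fixes f :: "'a \<Rightarrow> 'b \<Rightarrow> real"
  assumes "finite A" and bd: "\<And>x v. \<bar>f x v\<bar> \<le> 1"
  shows "measure_pmf.expectation (Pi_pmf A d p) (\<lambda>y. \<Prod>x\<in>A. f x (y x)) =
         (\<Prod>x\<in>A. measure_pmf.expectation (p x) (f x))"
  using assms(1)
proof (induction rule: finite_induct)
  case empty thus ?case by simp
next
  case (insert x A)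
  have pb: "\<bar>\<Prod>z\<in>B. f z (y z)\<bar> \<le> 1" for B y
    by (simp add: abs_prod prod_le_1 bd)
  have "measure_pmf.expectation (Pi_pmf (insert x A) d p) (\<lambda>y. \<Prod>z\<in>insert x A. f z (y z))
      = (\<integral>v. (\<integral>g. (\<integral>y. (\<Prod>z\<in>insert x A. f z (y z)) \<partial>return_pmf (g(x:=v))) \<partial>Pi_pmf A d p) \<partial>p x)"
    unfolding Pi_pmf_insert'[OF insert.hyps]
    apply (subst integral_bind_pmf_bdd[where B=1], rule pb)
    apply (rule Bochner_Integration.integral_cong[OF refl])
    apply (subst integral_bind_pmf_bdd[where B=1], rule pb)
    apply simp
    done
  also have "\<dots> = (\<integral>v. f x v * (\<integral>g. (\<Prod>z\<in>A. f z (g z)) \<partial>Pi_pmf A d p) \<partial>p x)"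
  proof (rule Bochner_Integration.integral_cong[OF refl])
    fix v
    have "(\<Prod>z\<in>insert x A. f z ((g(x:=v)) z)) = f x v * (\<Prod>z\<in>A. f z (g z))" for g
    proof -
      have "(\<Prod>z\<in>A. f z ((g(x:=v)) z)) = (\<Prod>z\<in>A. f z (g z))"
        using insert.hyps by (intro prod.cong) auto
      thus ?thesis using insert.hyps by simp
    qed
    thus "(\<integral>g. (\<integral>y. (\<Prod>z\<in>insert x A. f z (y z)) \<partial>return_pmf (g(x:=v))) \<partial>Pi_pmf A d p)
        = f x v * (\<integral>g. (\<Prod>z\<in>A. f z (g z)) \<partial>Pi_pmf A d p)"
      by simp
  qed
  also have "\<dots> = (\<Prod>z\<in>insert x A. measure_pmf.expectation (p z) (f z))"
    using insert by simp
  finally show ?case .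
qed



definition chi :: "nat set \<Rightarrow> (nat \<Rightarrow> bool) \<Rightarrow> real" where
  "chi T b = (\<Prod>i\<in>T. if b i then 1 else -1)"

definition hrw :: "nat \<Rightarrow> real \<Rightarrow> (nat \<Rightarrow> bool) \<Rightarrow> real" where
  "hrw l p b = (\<Sum>T\<in>Pow {0..<l} - {{}}. (1 - chi T b) / (1 - (1 - 2*p) ^ card T))"

lemma lam_pos:
  fixes p :: real assumes "0 < p" "p < 1" "0 < j"
  shows "0 < 1 - (1 - 2*p) ^ j"
proof -
  have a: "\<bar>1 - 2*p\<bar> < 1" "\<bar>1 - 2*p\<bar> \<ge> 0" using assms by auto
  have "\<bar>1 - 2*p\<bar> ^ j \<le> \<bar>1 - 2*p\<bar> ^ 1"
    by (rule power_decreasing) (use assms a in auto)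
  hence "\<bar>(1 - 2*p) ^ j\<bar> < 1" using a by (simp add: power_abs)
  thus ?thesis by linarith
qed

lemma chi_abs: "\<bar>chi T b\<bar> \<le> 1"
  unfolding chi_def by (simp add: abs_prod prod_le_1)

lemma chi_card_pos: "T \<in> Pow {0..<(l::nat)} - {{}} \<Longrightarrow> 0 < card T"
proof -
  assume T: "T \<in> Pow {0..<l} - {{}}"
  hence "finite T" using finite_subset[of T "{0..<l}"] by auto
  thus ?thesis using T by (auto simp: card_gt_0_iff)
qed

lemma hrw_nonneg:
  assumes "0 < p" "p < 1" shows "0 \<le> hrw l p b"
  unfolding hrw_def
proof (intro sum_nonneg divide_nonneg_pos)
  fix T assume T: "T \<in> Pow {0..<l} - {{}}"
  show "0 \<le> 1 - chi T b" using chi_abs[of T b] by linarith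
  show "0 < 1 - (1 - 2*p) ^ card T" using lam_pos[OF assms chi_card_pos[OF T]] .
qed

lemma hrw_le:
  assumes "0 < p" "p < 1"
  shows "hrw l p b \<le> (\<Sum>T\<in>Pow {0..<l} - {{}}. 2 / (1 - (1 - 2*p) ^ card T))"
  unfolding hrw_def
proof (intro sum_mono divide_right_mono)
  fix T assume T: "T \<in> Pow {0..<l} - {{}}"
  show "1 - chi T b \<le> 2" using chi_abs[of T b] by linarith
  show "0 \<le> 1 - (1 - 2*p) ^ card T" using lam_pos[OF assms chi_card_pos[OF T]] by linarith
qed

lemma chi_ones: "T \<subseteq> {0..<l} \<Longrightarrow> chi T (ones l) = 1"
  unfolding chi_def ones_def by (intro prod.neutral) auto

lemma hrw_ones: "hrw l p (ones l) = 0"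
  unfolding hrw_def by (intro sum.neutral) (auto simp: chi_ones)

lemma expect_chi_flip:
  fixes p :: real assumes "0 \<le> p" "p \<le> 1" and T: "T \<subseteq> {0..<l}"
  shows "measure_pmf.expectation (Pi_pmf {0..<l} False (\<lambda>_. bernoulli_pmf p)) (\<lambda>w. chi T (\<lambda>i. b i \<noteq> w i))
       = chi T b * (1 - 2*p) ^ card T"
proof -
  define f where "f = (\<lambda>i v. if i \<in> T then (if b i \<noteq> v then 1 else -1) else (1::real))"
  have "chi T (\<lambda>i. b i \<noteq> w i) = (\<Prod>i\<in>{0..<l}. f i (w i))" for w
  proof -
    have "(\<Prod>i\<in>{0..<l}. f i (w i)) = (\<Prod>i\<in>{0..<l} \<inter> T. if b i \<noteq> w i then 1 else -1)"
      unfolding f_def by (subst prod.inter_restrict[symmetric]) auto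
    also have "{0..<l} \<inter> T = T" using T by auto
    finally show ?thesis by (simp add: chi_def)
  qed
  hence "measure_pmf.expectation (Pi_pmf {0..<l} False (\<lambda>_. bernoulli_pmf p)) (\<lambda>w. chi T (\<lambda>i. b i \<noteq> w i))
      = measure_pmf.expectation (Pi_pmf {0..<l} False (\<lambda>_. bernoulli_pmf p)) (\<lambda>w. \<Prod>i\<in>{0..<l}. f i (w i))"
    by presburger
  also have "\<dots> = (\<Prod>i\<in>{0..<l}. measure_pmf.expectation (bernoulli_pmf p) (f i))"
    by (rule expectation_prod_Pi_pmf_bdd) (auto simp: f_def)
  also have "\<dots> = (\<Prod>i\<in>{0..<l}. if i \<in> T then (if b i then 1 else -1) * (1 - 2*p) else 1)"
    using assms by (intro prod.cong refl) (auto simp: f_def)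
  also have "\<dots> = (\<Prod>i\<in>T. (if b i then 1 else -1) * (1 - 2*p))"
    using T prod.inter_restrict[of "{0..<l}" "\<lambda>i. (if b i then 1 else -1) * (1 - 2*p)" T]
    by (simp add: Int_absorb1)
  also have "\<dots> = chi T b * (1 - 2*p) ^ card T"
    by (simp add: chi_def prod.distrib)
  finally show ?thesis .
qed

lemma chi_sum_Pow: "(\<Sum>T\<in>Pow {0..<l}. chi T b) = (\<Prod>i\<in>{0..<l}. (if b i then 1 else -1) + 1)"
  unfolding chi_def by (subst prod_add) auto

lemma aux_frac: "(1::real) - L \<noteq> 0 \<Longrightarrow> (1 - c)/(1-L) - (1 - c*L)/(1-L) = -c"
proof -
  assume L: "(1::real) - L \<noteq> 0"
  have "(1 - c)/(1-L) - (1 - c*L)/(1-L) = ((1-c) - (1-c*L))/(1-L)" by (simp add: diff_divide_distrib)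
  also have "(1-c) - (1-c*L) = -c*(1-L)" by algebra
  finally show ?thesis using L by simp
qed

lemma hrw_eq:
  assumes p: "0 < p" "p < 1" and b: "b \<in> blocks l" "b \<noteq> ones l"
  shows "hrw l p b = 1 + measure_pmf.expectation (rw_step l p b) (hrw l p)"
proof -
  let ?P = "Pow {0..<l} - {{}}"
  let ?M = "Pi_pmf {0..<l} False (\<lambda>_. bernoulli_pmf p)"
  have den: "T \<in> ?P \<Longrightarrow> 1 - (1 - 2*p) ^ card T \<noteq> 0" for T
  proof -
    assume "T \<in> ?P"
    from lam_pos[OF p chi_card_pos[OF this]] show ?thesis by linarith
  qed
  have chiint: "integrable (measure_pmf ?M) (\<lambda>w. chi T (\<lambda>i. b i \<noteq> w i))" for T
    by (rule integrable_pmf_bdd[where B=1]) (rule chi_abs)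
  have "measure_pmf.expectation (rw_step l p b) (hrw l p)
      = measure_pmf.expectation ?M (\<lambda>w. hrw l p (\<lambda>i. b i \<noteq> w i))"
    by (simp add: rw_step_def mutate_def)
  also have "\<dots> = (\<Sum>T\<in>?P. (1 - measure_pmf.expectation ?M (\<lambda>w. chi T (\<lambda>i. b i \<noteq> w i))) / (1 - (1 - 2*p) ^ card T))"
  proof -
    have "measure_pmf.expectation ?M (\<lambda>w. hrw l p (\<lambda>i. b i \<noteq> w i))
       = (\<Sum>T\<in>?P. measure_pmf.expectation ?M (\<lambda>w. (1 - chi T (\<lambda>i. b i \<noteq> w i)) / (1 - (1 - 2*p) ^ card T)))"
      unfolding hrw_def
      by (rule Bochner_Integration.integral_sum[where f="\<lambda>T w. (1 - chi T (\<lambda>i. b i \<noteq> w i)) / (1 - (1 - 2*p) ^ card T)"])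
         (intro integrable_divide Bochner_Integration.integrable_diff chiint, simp)
    also have "\<dots> = (\<Sum>T\<in>?P. (1 - measure_pmf.expectation ?M (\<lambda>w. chi T (\<lambda>i. b i \<noteq> w i))) / (1 - (1 - 2*p) ^ card T))"
    proof (rule sum.cong[OF refl])
      fix T
      have "measure_pmf.expectation ?M (\<lambda>w. (1 - chi T (\<lambda>i. b i \<noteq> w i)) / (1 - (1 - 2*p) ^ card T))
         = measure_pmf.expectation ?M (\<lambda>w. 1 - chi T (\<lambda>i. b i \<noteq> w i)) / (1 - (1 - 2*p) ^ card T)"
        by (rule integral_divide_zero)
      also have "measure_pmf.expectation ?M (\<lambda>w. 1 - chi T (\<lambda>i. b i \<noteq> w i))
         = 1 - measure_pmf.expectation ?M (\<lambda>w. chi T (\<lambda>i. b i \<noteq> w i))"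
        using Bochner_Integration.integral_diff[OF measure_pmf.integrable_const[of _ "1::real"] chiint[of T]] by simp
      finally show "measure_pmf.expectation ?M (\<lambda>w. (1 - chi T (\<lambda>i. b i \<noteq> w i)) / (1 - (1 - 2*p) ^ card T))
         = (1 - measure_pmf.expectation ?M (\<lambda>w. chi T (\<lambda>i. b i \<noteq> w i))) / (1 - (1 - 2*p) ^ card T)" .
    qed
    finally show ?thesis .
  qed
  also have "\<dots> = (\<Sum>T\<in>?P. (1 - chi T b * (1 - 2*p) ^ card T) / (1 - (1 - 2*p) ^ card T))"
    using p by (intro sum.cong refl, subst expect_chi_flip) auto
  finally have E: "measure_pmf.expectation (rw_step l p b) (hrw l p) = \<dots>" .
  have "hrw l p b - (\<Sum>T\<in>?P. (1 - chi T b * (1 - 2*p) ^ card T) / (1 - (1 - 2*p) ^ card T))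
      = (\<Sum>T\<in>?P. - chi T b)"
    unfolding hrw_def sum_subtractf[symmetric]
  proof (rule sum.cong[OF refl])
    fix T assume "T \<in> ?P"
    from aux_frac[OF den[OF this]] show "(1 - chi T b) / (1 - (1 - 2*p) ^ card T) -
         (1 - chi T b * (1 - 2*p) ^ card T) / (1 - (1 - 2*p) ^ card T) = - chi T b" .
  qed
  also have "\<dots> = - ((\<Sum>T\<in>Pow {0..<l}. chi T b) - chi {} b)"
    by (subst sum_diff1) (auto simp: sum_negf)
  also have "(\<Sum>T\<in>Pow {0..<l}. chi T b) = 0"
  proof -
    have "\<exists>i. b i \<noteq> ones l i" using b(2) by (auto simp: fun_eq_iff)
    then obtain i where i0: "b i \<noteq> (i < l)" unfolding ones_def by auto
    have i: "i < l" "\<not> b i" using i0 b(1) unfolding blocks_def by auto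
    show ?thesis unfolding chi_sum_Pow using i by (intro prod_zero) auto
  qed
  finally show ?thesis using E by (simp add: chi_def)
qed

lemma blocks_PiE: "blocks l = PiE_dflt {0..<l} False (\<lambda>_. UNIV)"
  unfolding blocks_def PiE_dflt_def by auto

lemma rw_step_inv: "b \<in> blocks l \<Longrightarrow> set_pmf (rw_step l p b) \<subseteq> blocks l"
  using set_Pi_pmf_subset[of "{0..<l}" False "\<lambda>_. bernoulli_pmf p"]
  unfolding rw_step_def mutate_def blocks_def by fastforce



lemma finite_blocks: "finite (blocks l)"
  unfolding blocks_PiE by (intro finite_PiE_dflt) auto

lemma card_blocks: "card (blocks l) = 2 ^ l"
  unfolding blocks_PiE by (subst card_PiE_dflt) auto

lemma ones_blocks: "ones l \<in> blocks l"
  unfolding blocks_def ones_def by auto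

lemma chi_sum_blocks:
  assumes T: "T \<subseteq> {0..<l}" "T \<noteq> {}"
  shows "(\<Sum>b\<in>blocks l. chi T b) = 0"
proof -
  have ne: "blocks l \<noteq> {}" using ones_blocks by auto
  have pm: "pmf_of_set (blocks l) = Pi_pmf {0..<l} False (\<lambda>_. pmf_of_set UNIV)"
    unfolding blocks_PiE by (subst Pi_pmf_of_set) auto
  define f where "f = (\<lambda>i v. if i \<in> T then (if v then 1 else -1) else (1::real))"
  have "chi T b = (\<Prod>i\<in>{0..<l}. f i (b i))" for b
  proof -
    have "(\<Prod>i\<in>{0..<l}. f i (b i)) = (\<Prod>i\<in>{0..<l} \<inter> T. if b i then 1 else -1)"
      unfolding f_def by (subst prod.inter_restrict) auto
    also have "{0..<l} \<inter> T = T" using T by auto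
    finally show ?thesis by (simp add: chi_def)
  qed
  hence "measure_pmf.expectation (pmf_of_set (blocks l)) (chi T)
      = measure_pmf.expectation (Pi_pmf {0..<l} False (\<lambda>_. pmf_of_set UNIV)) (\<lambda>b. \<Prod>i\<in>{0..<l}. f i (b i))"
    unfolding pm by presburger
  also have "\<dots> = (\<Prod>i\<in>{0..<l}. measure_pmf.expectation (pmf_of_set UNIV) (f i))"
    by (rule expectation_prod_Pi_pmf_bdd) (auto simp: f_def)
  also have "\<dots> = 0"
  proof -
    obtain i where i: "i \<in> T" using T by auto
    have "measure_pmf.expectation (pmf_of_set UNIV) (f i) = 0"
      using i by (simp add: integral_pmf_of_set UNIV_bool f_def)
    thus ?thesis using i T by (intro prod_zero) auto
  qed
  finally show ?thesis using finite_blocks ne by (simp add: integral_pmf_of_set)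
qed

lemma sum_Pow_by_card:
  fixes g :: "nat \<Rightarrow> real"
  shows "(\<Sum>T\<in>Pow {0..<l} - {{}}. g (card T)) = (\<Sum>j=1..l. real (l choose j) * g j)"
proof -
  let ?P = "Pow {0..<l} - {{}}"
  have fin: "finite ?P" by auto
  have img: "card ` ?P \<subseteq> {1..l}"
  proof
    fix j assume "j \<in> card ` ?P"
    then obtain T where T: "T \<in> ?P" "j = card T" by auto
    have "card T \<le> card {0..<l}" using T by (intro card_mono) auto
    thus "j \<in> {1..l}" using chi_card_pos[OF T(1)] T by auto
  qed
  have "(\<Sum>T\<in>?P. g (card T)) = (\<Sum>j\<in>{1..l}. \<Sum>T\<in>{T. T \<in> ?P \<and> card T = j}. g (card T))"
    by (rule sum.group[OF fin _ img, symmetric]) simp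
  also have "\<dots> = (\<Sum>j\<in>{1..l}. real (l choose j) * g j)"
  proof (rule sum.cong[OF refl])
    fix j assume j: "j \<in> {1..l}"
    have "{T. T \<in> ?P \<and> card T = j} = {B. B \<subseteq> {0..<l} \<and> card B = j}"
      using j by auto
    hence "card {T. T \<in> ?P \<and> card T = j} = l choose j"
      using n_subsets[of "{0..<l}" j] by simp
    moreover have "(\<Sum>T\<in>{T. T \<in> ?P \<and> card T = j}. g (card T)) = (\<Sum>T\<in>{T. T \<in> ?P \<and> card T = j}. g j)"
      by (intro sum.cong) auto
    ultimately show "(\<Sum>T\<in>{T. T \<in> ?P \<and> card T = j}. g (card T)) = real (l choose j) * g j"
      by simp
  qed
  finally show ?thesis .
qed

lemma hrw_value:
  assumes p: "0 < p" "p < 1" and l: "0 < l"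
  shows "measure_pmf.expectation (unif_nonones l) (hrw l p)
       = 2 ^ l / (2 ^ l - 1) * (\<Sum>j=1..l. real (l choose j) / (1 - (1 - 2 * p) ^ j))"
proof -
  let ?P = "Pow {0..<l} - {{}}"
  let ?d = "\<lambda>T. 1 - (1 - 2*p) ^ card T"
  have z: "(\<lambda>_. False) \<in> blocks l - {ones l}"
    using l unfolding blocks_def ones_def by (auto simp: fun_eq_iff)
  have ne: "blocks l - {ones l} \<noteq> {}" using z by auto
  have cardm: "card (blocks l - {ones l}) = 2 ^ l - 1"
    using ones_blocks finite_blocks by (simp add: card_blocks)
  have "measure_pmf.expectation (unif_nonones l) (hrw l p) = sum (hrw l p) (blocks l - {ones l}) / (2 ^ l - 1)"
    unfolding unif_nonones_def using ne finite_blocks cardm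
    by (simp add: integral_pmf_of_set of_nat_diff)
  also have "sum (hrw l p) (blocks l - {ones l}) = sum (hrw l p) (blocks l)"
    using finite_blocks ones_blocks by (simp add: sum_diff1 hrw_ones)
  also have "\<dots> = (\<Sum>T\<in>?P. \<Sum>b\<in>blocks l. (1 - chi T b) / ?d T)"
    unfolding hrw_def by (rule sum.swap)
  also have "\<dots> = (\<Sum>T\<in>?P. 2 ^ l / ?d T)"
  proof (rule sum.cong[OF refl])
    fix T assume T: "T \<in> ?P"
    have "(\<Sum>b\<in>blocks l. (1 - chi T b) / ?d T) = (\<Sum>b\<in>blocks l. (1 - chi T b)) / ?d T"
      by (simp add: sum_divide_distrib)
    also have "(\<Sum>b\<in>blocks l. (1 - chi T b)) = 2 ^ l"
      using chi_sum_blocks[of T l] T by (simp add: sum_subtractf card_blocks)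
    finally show "(\<Sum>b\<in>blocks l. (1 - chi T b) / ?d T) = 2 ^ l / ?d T" .
  qed
  also have "\<dots> = (\<Sum>j=1..l. real (l choose j) * (2 ^ l / (1 - (1 - 2*p) ^ j)))"
    by (rule sum_Pow_by_card)
  finally show ?thesis
    by (simp add: sum_distrib_left sum_divide_distrib field_simps)
qed



lemma prod_ind_nat: fixes x :: "nat \<Rightarrow> bool" shows "(\<Prod>i<(N::nat). (if x i then 1 else 0 :: nat)) = (if \<forall>i<N. x i then 1 else 0)"
  by (induction N) (auto simp: less_Suc_eq)

lemma BLO_card: "BLO n l x = card {j\<in>{1..n div l}. \<forall>i<j*l. x i}"
proof -
  have "BLO n l x = (\<Sum>j\<in>{1..n div l}. if \<forall>i<j*l. x i then 1 else 0)"
    unfolding BLO_def by (simp add: prod_ind_nat)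
  also have "\<dots> = (\<Sum>j\<in>{j\<in>{1..n div l}. \<forall>i<j*l. x i}. 1)"
    by (subst sum.inter_filter[symmetric]) auto
  finally show ?thesis by simp
qed

lemma BLO_ge_iff:
  assumes l: "0 < l" and j: "j \<le> n div l"
  shows "j \<le> BLO n l x \<longleftrightarrow> (\<forall>i<j*l. x i)"
proof
  assume H: "\<forall>i<j*l. x i"
  have "{1..j} \<subseteq> {j'\<in>{1..n div l}. \<forall>i<j'*l. x i}"
  proof
    fix j' assume "j' \<in> {1..j}"
    hence "j' \<le> j" "1 \<le> j'" by auto
    moreover have "j' * l \<le> j * l" using \<open>j' \<le> j\<close> by simp
    hence "\<forall>i<j'*l. x i" using H order_less_le_trans by blast
    ultimately show "j' \<in> {j'\<in>{1..n div l}. \<forall>i<j'*l. x i}" using H j by auto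
  qed
  hence "card {1..j} \<le> card {j'\<in>{1..n div l}. \<forall>i<j'*l. x i}" by (intro card_mono) auto
  thus "j \<le> BLO n l x" unfolding BLO_card by simp
next
  assume H: "j \<le> BLO n l x"
  show "\<forall>i<j*l. x i"
  proof (rule ccontr)
    assume "\<not> (\<forall>i<j*l. x i)"
    then obtain i0 where i0: "i0 < j*l" "\<not> x i0" by auto
    have "{j'\<in>{1..n div l}. \<forall>i<j'*l. x i} \<subseteq> {1..i0 div l}"
    proof
      fix j' assume j': "j' \<in> {j'\<in>{1..n div l}. \<forall>i<j'*l. x i}"
      hence "\<not> i0 < j' * l" using i0 by auto
      hence "j' * l \<le> i0" by simp
      hence "j' * l div l \<le> i0 div l" by (rule div_le_mono)
      thus "j' \<in> {1..i0 div l}" using j' l by auto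
    qed
    hence "card {j'\<in>{1..n div l}. \<forall>i<j'*l. x i} \<le> i0 div l"
      using card_mono[of "{1..i0 div l}"] by fastforce
    moreover have "i0 div l < j" using i0(1) l by (simp add: less_mult_imp_div_less)
    ultimately show False using H unfolding BLO_card by linarith
  qed
qed

definition blk :: "nat \<Rightarrow> nat \<Rightarrow> (nat \<Rightarrow> bool) \<Rightarrow> nat \<Rightarrow> bool" where
  "blk k l w = (\<lambda>j. if j < l then w (k + j) else False)"

lemma split_pmf:
  fixes p :: real
  assumes p: "0 \<le> p" "p \<le> 1" and kl: "k + l \<le> n"
  shows "map_pmf (\<lambda>w. (\<forall>i<k. \<not> w i, blk k l w)) (Pi_pmf {0..<n} False (\<lambda>_. bernoulli_pmf p))
       = pair_pmf (bernoulli_pmf ((1 - p) ^ k)) (Pi_pmf {0..<l} False (\<lambda>_. bernoulli_pmf p))"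
proof (rule pmf_eqI)
  fix cv :: "bool \<times> (nat \<Rightarrow> bool)"
  obtain c v where cv: "cv = (c, v)" by (cases cv)
  let ?W = "Pi_pmf {0..<n} False (\<lambda>_. bernoulli_pmf p)"
  let ?R = "Pi_pmf {0..<l} False (\<lambda>_. bernoulli_pmf p)"
  let ?q = "(1 - p) ^ k"
  have q: "0 \<le> ?q" "?q \<le> 1" using p by (auto intro: power_le_one)
  let ?Phi = "\<lambda>w. (\<forall>i<k. \<not> w i, blk k l w)"
  show "pmf (map_pmf ?Phi ?W) cv = pmf (pair_pmf (bernoulli_pmf ?q) ?R) cv"
  proof (cases "\<exists>j. j \<notin> {0..<l} \<and> v j \<noteq> False")
    case True
    have "?Phi -` {cv} = {}" using True unfolding cv blk_def by (auto simp: fun_eq_iff)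
    hence "pmf (map_pmf ?Phi ?W) cv = 0" by (simp add: pmf_map)
    moreover have "pmf ?R v = 0" using True by (intro pmf_Pi_outside) auto
    ultimately show ?thesis unfolding cv by (simp add: pmf_pair)
  next
    case False
    define Pv where "Pv = (\<Prod>j\<in>{0..<l}. pmf (bernoulli_pmf p) (v j))"
    have Rv: "pmf ?R v = Pv" unfolding Pv_def using False by (subst pmf_Pi') auto
    define B1 where "B1 = (\<lambda>i. if k \<le> i \<and> i < k + l then {v (i - k)} else (UNIV :: bool set))"
    define B2 where "B2 = (\<lambda>i. if i < k then {False} else B1 i)"
    have E1: "{w. blk k l w = v} = Pi {0..<n} B1"
    proof (intro equalityI subsetI)
      fix w assume "w \<in> {w. blk k l w = v}"
      hence bw: "blk k l w = v" by simp
      have "\<forall>j<l. w (k + j) = v j"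
      proof (intro allI impI)
        fix j assume "j < l"
        thus "w (k + j) = v j" using fun_cong[OF bw, of j] unfolding blk_def by simp
      qed
      hence key: "w i = v (i - k)" if "k \<le> i" "i < k + l" for i
        using that by (auto dest!: spec[of _ "i - k"])
      show "w \<in> Pi {0..<n} B1" unfolding B1_def using key by (auto simp: Pi_def)
    next
      fix w assume w: "w \<in> Pi {0..<n} B1"
      have "w (k + j) = v j" if "j < l" for j
        using w that kl unfolding B1_def Pi_def by (auto dest!: spec[of _ "k+j"])
      thus "w \<in> {w. blk k l w = v}" using False unfolding blk_def by (auto simp: fun_eq_iff)
    qed
    have E2: "{w. (\<forall>i<k. \<not> w i) \<and> blk k l w = v} = Pi {0..<n} B2"
    proof -
      have "{w. (\<forall>i<k. \<not> w i) \<and> blk k l w = v} = {w. \<forall>i<k. \<not> w i} \<inter> {w. blk k l w = v}" by auto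
      also have "\<dots> = {w. \<forall>i<k. \<not> w i} \<inter> Pi {0..<n} B1" by (simp only: E1)
      also have "\<dots> = Pi {0..<n} B2" using kl unfolding B2_def B1_def by (auto simp: Pi_def)
      finally show ?thesis .
    qed
    have F1: "measure_pmf.prob (bernoulli_pmf p) (B1 i) = (if i \<in> {k..<k+l} then pmf (bernoulli_pmf p) (v (i - k)) else 1)" for i
      unfolding B1_def by (auto simp: measure_pmf_single)
    have F2: "measure_pmf.prob (bernoulli_pmf p) (B2 i) = (if i \<in> {..<k} then 1 - p else 1) * measure_pmf.prob (bernoulli_pmf p) (B1 i)" for i
      using p unfolding B2_def B1_def by (auto simp: measure_pmf_single)
    have P1: "measure_pmf.prob ?W {w. blk k l w = v} = Pv"
    proof -
      have "measure_pmf.prob ?W {w. blk k l w = v} = (\<Prod>i\<in>{0..<n}. measure_pmf.prob (bernoulli_pmf p) (B1 i))"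
        unfolding E1 by (rule measure_Pi_pmf_Pi) simp
      also have "\<dots> = (\<Prod>i\<in>{0..<n} \<inter> {k..<k+l}. pmf (bernoulli_pmf p) (v (i - k)))"
        unfolding F1 by (subst prod.inter_restrict) auto
      also have "{0..<n} \<inter> {k..<k+l} = {0+k..<l+k}" using kl by auto
      also have "(\<Prod>i\<in>{0+k..<l+k}. pmf (bernoulli_pmf p) (v (i - k))) = Pv"
        unfolding Pv_def by (subst prod.shift_bounds_nat_ivl) simp
      finally show ?thesis .
    qed
    have P2: "measure_pmf.prob ?W {w. (\<forall>i<k. \<not> w i) \<and> blk k l w = v} = ?q * Pv"
    proof -
      have "measure_pmf.prob ?W {w. (\<forall>i<k. \<not> w i) \<and> blk k l w = v} = (\<Prod>i\<in>{0..<n}. measure_pmf.prob (bernoulli_pmf p) (B2 i))"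
        unfolding E2 by (rule measure_Pi_pmf_Pi) simp
      also have "\<dots> = (\<Prod>i\<in>{0..<n}. if i \<in> {..<k} then 1 - p else 1) * (\<Prod>i\<in>{0..<n}. measure_pmf.prob (bernoulli_pmf p) (B1 i))"
        unfolding F2 by (rule prod.distrib)
      also have "(\<Prod>i\<in>{0..<n}. if i \<in> {..<k} then 1 - p else 1) = (\<Prod>i\<in>{0..<n} \<inter> {..<k}. 1 - p)"
        by (subst prod.inter_restrict) auto
      also have "{0..<n} \<inter> {..<k} = {..<k}" using kl by auto
      also have "(\<Prod>i\<in>{0..<n}. measure_pmf.prob (bernoulli_pmf p) (B1 i)) = Pv"
        using P1 unfolding E1 by (simp add: measure_Pi_pmf_Pi)
      finally show ?thesis by simp
    qed
    show ?thesis
    proof (cases c)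
      case True
      have "?Phi -` {cv} = {w. (\<forall>i<k. \<not> w i) \<and> blk k l w = v}" unfolding cv using True by auto
      hence "pmf (map_pmf ?Phi ?W) cv = ?q * Pv" using P2 by (simp add: pmf_map)
      thus ?thesis unfolding cv using True q Rv by (simp add: pmf_pair)
    next
      case c: False
      have "?Phi -` {cv} = {w. blk k l w = v} - {w. (\<forall>i<k. \<not> w i) \<and> blk k l w = v}" unfolding cv using c by auto
      moreover have "measure_pmf.prob ?W ({w. blk k l w = v} - {w. (\<forall>i<k. \<not> w i) \<and> blk k l w = v})
          = measure_pmf.prob ?W {w. blk k l w = v} - measure_pmf.prob ?W {w. (\<forall>i<k. \<not> w i) \<and> blk k l w = v}"
        by (rule measure_pmf.finite_measure_Diff) auto
      ultimately have "pmf (map_pmf ?Phi ?W) cv = Pv - ?q * Pv" using P1 P2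
        by (simp add: pmf_map)
      thus ?thesis unfolding cv using c q Rv by (simp add: pmf_pair algebra_simps)
    qed
  qed
qed



theorem mainTheorem11:
  fixes n l m k :: nat and p :: real and z :: "nat \<Rightarrow> bool"
  assumes "0 < n" and "0 < l" and "l dvd n"
    and "k = m * l" and "m < n div l"
    and "0 < p" and "p < 1"
  shows "expected_hitting_time (ea_step n l p)
           (map_pmf (init_ind n l k z) (unif_nonones l)) {x. BLO n l x > m}
         = expected_hitting_time (rw_step l p) (unif_nonones l) {ones l}
             / ennreal ((1 - p) ^ k)
       \<and> expected_hitting_time (ea_step n l p)
           (map_pmf (init_ind n l k z) (unif_nonones l)) {x. BLO n l x > m}
         = ennreal (2 ^ l / (2 ^ l - 1) / (1 - p) ^ k
             * (\<Sum>j=1..l. real (l choose j) / (1 - (1 - 2 * p) ^ j)))"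
proof -
  note l = assms(2) and kdef = assms(4) and mlt = assms(5) and p = assms(6,7)
  define q where "q = (1 - p) ^ k"
  have q0: "0 < q" unfolding q_def using p by simp
  have q1: "q \<le> 1" unfolding q_def using p by (simp add: power_le_one)
  define Bd where "Bd = (\<Sum>T\<in>Pow {0..<l} - {{}}. 2 / (1 - (1 - 2*p) ^ card T))"
  define H where "H = measure_pmf.expectation (unif_nonones l) (hrw l p)"
  have Hval: "H = 2 ^ l / (2 ^ l - 1) * (\<Sum>j=1..l. real (l choose j) / (1 - (1 - 2 * p) ^ j))"
    unfolding H_def by (rule hrw_value[OF p l])
  have H0: "0 \<le> H" unfolding H_def using hrw_nonneg[OF p] by (intro integral_nonneg_AE) auto
  have fin: "finite (blocks l - {ones l})" using finite_blocks by auto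
  have ne: "blocks l - {ones l} \<noteq> {}"
  proof -
    have "(\<lambda>_. False) \<in> blocks l - {ones l}"
      using l unfolding blocks_def ones_def by (auto simp: fun_eq_iff)
    thus ?thesis by auto
  qed
  have setmu: "set_pmf (unif_nonones l) = blocks l - {ones l}"
    unfolding unif_nonones_def using fin ne by simp
  have Erw: "expected_hitting_time (rw_step l p) (unif_nonones l) {ones l} = ennreal H"
    unfolding H_def
  proof (rule hitting_time_potential[where A="blocks l" and B=Bd])
    show "\<And>x. x \<in> blocks l \<Longrightarrow> set_pmf (rw_step l p x) \<subseteq> blocks l" by (rule rw_step_inv)
    show "\<And>x. 0 \<le> hrw l p x" by (rule hrw_nonneg[OF p])
    show "\<And>x. hrw l p x \<le> Bd" unfolding Bd_def by (rule hrw_le[OF p])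
    show "\<And>x. x \<in> blocks l \<Longrightarrow> x \<in> {ones l} \<Longrightarrow> hrw l p x = 0" by (simp add: hrw_ones)
    show "\<And>x. x \<in> blocks l \<Longrightarrow> x \<notin> {ones l} \<Longrightarrow> hrw l p x = 1 + measure_pmf.expectation (rw_step l p x) (hrw l p)"
      using hrw_eq[OF p] by simp
    show "set_pmf (unif_nonones l) \<subseteq> blocks l" using setmu by auto
  qed
  have m1: "m + 1 \<le> n div l" using mlt by simp
  have kl: "k + l \<le> n"
  proof -
    have "(m + 1) * l \<le> n div l * l" using m1 by (intro mult_right_mono) auto
    also have "\<dots> \<le> n" by simp
    finally show ?thesis using kdef by simp
  qed
  have geiff: "m \<le> BLO n l y \<longleftrightarrow> (\<forall>i<k. y i)" for y
    using BLO_ge_iff[OF l, of m n y] m1 kdef by simp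
  have Siff: "m < BLO n l y \<longleftrightarrow> blk k l y = ones l" if y: "\<forall>i<k. y i" for y
  proof -
    have "m < BLO n l y \<longleftrightarrow> Suc m \<le> BLO n l y" by (rule Suc_le_eq[symmetric])
    also have "\<dots> \<longleftrightarrow> (\<forall>i<Suc m * l. y i)" using BLO_ge_iff[OF l, of "Suc m" n y] m1 by simp
    also have "\<dots> \<longleftrightarrow> (\<forall>j<l. y (k + j))"
    proof
      assume "\<forall>i<Suc m * l. y i" thus "\<forall>j<l. y (k + j)" using kdef by auto
    next
      assume H: "\<forall>j<l. y (k + j)"
      show "\<forall>i<Suc m * l. y i"
      proof (intro allI impI)
        fix i assume i: "i < Suc m * l"
        show "y i"
        proof (cases "i < k")
          case True thus ?thesis using y by auto
        next
          case False
          hence "i = k + (i - k)" "i - k < l" using i kdef by auto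
          thus ?thesis using H by metis
        qed
      qed
    qed
    also have "\<dots> \<longleftrightarrow> blk k l y = ones l"
      unfolding blk_def ones_def by (auto simp: fun_eq_iff)
    finally show ?thesis .
  qed
  define hEA where "hEA = (\<lambda>y. hrw l p (blk k l y) / q)"
  have Eea: "expected_hitting_time (ea_step n l p) (map_pmf (init_ind n l k z) (unif_nonones l)) {x. BLO n l x > m}
      = ennreal (measure_pmf.expectation (map_pmf (init_ind n l k z) (unif_nonones l)) hEA)"
  proof (rule hitting_time_potential[where A="{y. \<forall>i<k. y i}" and B="Bd / q"])
    show "set_pmf (ea_step n l p x) \<subseteq> {y. \<forall>i<k. y i}" if "x \<in> {y. \<forall>i<k. y i}" for x
    proof
      fix y assume "y \<in> set_pmf (ea_step n l p x)"
      hence "y \<in> (\<lambda>y. if BLO n l y \<ge> BLO n l x then y else x) ` ((\<lambda>w i. x i \<noteq> w i) ` set_pmf (Pi_pmf {0..<n} False (\<lambda>_. bernoulli_pmf p)))"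
        unfolding ea_step_def mutate_def by (simp only: set_map_pmf)
      then obtain w where y: "y = (if BLO n l (\<lambda>i. x i \<noteq> w i) \<ge> BLO n l x then (\<lambda>i. x i \<noteq> w i) else x)"
        by blast
      have "m \<le> BLO n l x" using that geiff by auto
      hence "m \<le> BLO n l y" unfolding y by auto
      thus "y \<in> {y. \<forall>i<k. y i}" using geiff by auto
    qed
    show "\<And>x. 0 \<le> hEA x" unfolding hEA_def using hrw_nonneg[OF p] q0 by simp
    show "\<And>x. hEA x \<le> Bd / q" unfolding hEA_def Bd_def using hrw_le[OF p] q0 by (simp add: divide_right_mono)
    show "\<And>x. x \<in> {y. \<forall>i<k. y i} \<Longrightarrow> x \<in> {x. m < BLO n l x} \<Longrightarrow> hEA x = 0"
      unfolding hEA_def using Siff by (simp add: hrw_ones)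
    show "hEA x = 1 + measure_pmf.expectation (ea_step n l p x) hEA"
      if x: "x \<in> {y. \<forall>i<k. y i}" "x \<notin> {x. m < BLO n l x}" for x
    proof -
      define bx where "bx = blk k l x"
      have bxb: "bx \<in> blocks l" unfolding bx_def blk_def blocks_def by auto
      have bxo: "bx \<noteq> ones l" using Siff x unfolding bx_def by auto
      have BLOx: "BLO n l x = m" using x geiff by (metis (mono_tags) le_neq_implies_less mem_Collect_eq)
      let ?W = "Pi_pmf {0..<n} False (\<lambda>_. bernoulli_pmf p)"
      let ?R = "Pi_pmf {0..<l} False (\<lambda>_. bernoulli_pmf p)"
      define G where "G = (\<lambda>(c, v). hrw l p (if c then (\<lambda>j. bx j \<noteq> v j) else bx) / q)"
      have Gb: "\<bar>G cv\<bar> \<le> Bd / q" for cv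
        unfolding G_def Bd_def using hrw_le[OF p] hrw_nonneg[OF p] q0
        by (auto split: prod.splits simp: divide_right_mono)
      have pw: "hEA (if BLO n l (\<lambda>i. x i \<noteq> w i) \<ge> BLO n l x then (\<lambda>i. x i \<noteq> w i) else x)
              = G (\<forall>i<k. \<not> w i, blk k l w)" for w
      proof -
        have acc: "BLO n l (\<lambda>i. x i \<noteq> w i) \<ge> BLO n l x \<longleftrightarrow> (\<forall>i<k. \<not> w i)"
          unfolding BLOx geiff using x by auto
        have bl: "blk k l (\<lambda>i. x i \<noteq> w i) = (\<lambda>j. bx j \<noteq> blk k l w j)"
          unfolding bx_def blk_def by auto
        show ?thesis unfolding hEA_def G_def acc using bl bx_def by auto
      qed
      have "measure_pmf.expectation (ea_step n l p x) hEA
          = measure_pmf.expectation ?W (\<lambda>w. G (\<forall>i<k. \<not> w i, blk k l w))"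
        unfolding ea_step_def mutate_def map_pmf_comp integral_map_pmf
        by (rule Bochner_Integration.integral_cong[OF refl]) (rule pw)
      also have "\<dots> = measure_pmf.expectation (map_pmf (\<lambda>w. (\<forall>i<k. \<not> w i, blk k l w)) ?W) G"
        by simp
      also have "\<dots> = measure_pmf.expectation (pair_pmf (bernoulli_pmf q) ?R) G"
        unfolding q_def using p kl by (subst split_pmf) auto
      also have "\<dots> = measure_pmf.expectation (bernoulli_pmf q) (\<lambda>c. measure_pmf.expectation ?R (\<lambda>v. G (c, v)))"
        unfolding pair_pmf_def map_pmf_def[symmetric]
        by (subst integral_bind_pmf_bdd[where B="Bd/q"]) (auto intro: Gb)
      also have "\<dots> = q * measure_pmf.expectation ?R (\<lambda>v. hrw l p (\<lambda>j. bx j \<noteq> v j) / q) + (1 - q) * (hrw l p bx / q)"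
        using q0 q1 by (simp add: G_def) (simp add: field_simps)
      also have "measure_pmf.expectation ?R (\<lambda>v. hrw l p (\<lambda>j. bx j \<noteq> v j) / q)
          = measure_pmf.expectation (rw_step l p bx) (hrw l p) / q"
        unfolding rw_step_def mutate_def by simp
      also have "measure_pmf.expectation (rw_step l p bx) (hrw l p) = hrw l p bx - 1"
        using hrw_eq[OF p bxb bxo] by simp
      finally have E: "measure_pmf.expectation (ea_step n l p x) hEA = q * ((hrw l p bx - 1) / q) + (1 - q) * (hrw l p bx / q)" .
      have hx: "hEA x = hrw l p bx / q" unfolding hEA_def bx_def ..
      show ?thesis unfolding E hx using q0 by (simp add: field_simps)
    qed
    show "set_pmf (map_pmf (init_ind n l k z) (unif_nonones l)) \<subseteq> {y. \<forall>i<k. y i}"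
      unfolding init_ind_def by auto
  qed
  have Emu: "measure_pmf.expectation (map_pmf (init_ind n l k z) (unif_nonones l)) hEA = H / q"
  proof -
    have "measure_pmf.expectation (map_pmf (init_ind n l k z) (unif_nonones l)) hEA
        = measure_pmf.expectation (unif_nonones l) (\<lambda>b. hrw l p b / q)"
      unfolding integral_map_pmf
    proof (intro integral_cong_AE AE_pmfI)
      fix b assume "b \<in> set_pmf (unif_nonones l)"
      hence b: "b \<in> blocks l" using setmu by auto
      have "blk k l (init_ind n l k z b) = b"
        using b unfolding blk_def init_ind_def blocks_def by (auto simp: fun_eq_iff)
      thus "hEA (init_ind n l k z b) = hrw l p b / q" unfolding hEA_def by simp
    qed auto
    also have "\<dots> = H / q" unfolding H_def by simp
    finally show ?thesis .
  qed
  have main: "expected_hitting_time (ea_step n l p) (map_pmf (init_ind n l k z) (unif_nonones l)) {x. BLO n l x > m}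
      = ennreal (H / q)" using Eea Emu by simp
  show ?thesis
  proof
    show "expected_hitting_time (ea_step n l p) (map_pmf (init_ind n l k z) (unif_nonones l)) {x. BLO n l x > m}
       = expected_hitting_time (rw_step l p) (unif_nonones l) {ones l} / ennreal ((1 - p) ^ k)"
      unfolding main Erw q_def[symmetric] using divide_ennreal[OF H0 q0] by simp
    show "expected_hitting_time (ea_step n l p) (map_pmf (init_ind n l k z) (unif_nonones l)) {x. BLO n l x > m}
       = ennreal (2 ^ l / (2 ^ l - 1) / (1 - p) ^ k * (\<Sum>j=1..l. real (l choose j) / (1 - (1 - 2 * p) ^ j)))"
      unfolding main Hval q_def by simp
  qed
qed


end
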